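(* Let $a(x),b(x)\in\mathbb{F}_2[x]/\langle x^n-1\rangle$ both have weight at least two. Then the girth $g(G)$ of the Tanner graph associated with the generalized bicycle code defined by $a(x)$ and $b(x)$ satisfies $g(G)\le 8$.
   Context: Weight is the number of nonzero coefficients. The Tanner graph of the GB code defined by $a(x)=\sum a_tx^t$, $b(x)=\sum b_tx^t$ is the bipartite graph with $n$ check nodes $x_0,\dots,x_{n-1}$ (X-checks) and $2n$ qubit nodes $q_0,\dots,q_{n-1},q'_0,\dots,q'_{n-1}$, where $x_t$ is adjacent to $q_c$ iff $a_{t-c}=1$ and to $q'_c$ iff $b_{t-c}=1$ (indices mod $n$). The girth is the length of a shortest cycle. *)

theory Defs
  imports Main "HOL-Library.Extended_Nat"
begin

text \<open>An element of F2[x]/(x^n - 1) is represented by its coefficient vector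
  a :: nat => bool, where a t (for t < n) is the coefficient of x^t
  (True = 1, False = 0); values at t >= n are irrelevant.\<close>

definition weight :: "nat \<Rightarrow> (nat \<Rightarrow> bool) \<Rightarrow> nat" where
  "weight n a = card {t. t < n \<and> a t}"

datatype node = Chk nat | Qb nat | Qb' nat

definition tanner_nodes :: "nat \<Rightarrow> node set" where
  "tanner_nodes n = Chk ` {..<n} \<union> Qb ` {..<n} \<union> Qb' ` {..<n}"

fun tanner_adj0 :: "nat \<Rightarrow> (nat \<Rightarrow> bool) \<Rightarrow> (nat \<Rightarrow> bool) \<Rightarrow> node \<Rightarrow> node \<Rightarrow> bool" where
  "tanner_adj0 n a b (Chk t) (Qb c) = a ((t + n - c) mod n)"
| "tanner_adj0 n a b (Chk t) (Qb' c) = b ((t + n - c) mod n)"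
| "tanner_adj0 n a b _ _ = False"

definition tanner_adj :: "nat \<Rightarrow> (nat \<Rightarrow> bool) \<Rightarrow> (nat \<Rightarrow> bool) \<Rightarrow> node \<Rightarrow> node \<Rightarrow> bool" where
  "tanner_adj n a b u v \<longleftrightarrow> u \<in> tanner_nodes n \<and> v \<in> tanner_nodes n \<and>
     (tanner_adj0 n a b u v \<or> tanner_adj0 n a b v u)"

definition tanner_cycle :: "nat \<Rightarrow> (nat \<Rightarrow> bool) \<Rightarrow> (nat \<Rightarrow> bool) \<Rightarrow> node list \<Rightarrow> bool" where
  "tanner_cycle n a b vs \<longleftrightarrow> length vs \<ge> 3 \<and> distinct vs \<and>
     (\<forall>i < length vs. tanner_adj n a b (vs ! i) (vs ! ((i + 1) mod length vs)))"

text \<open>Girth: length of a shortest cycle (infinity if there is none).\<close>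
definition tanner_girth :: "nat \<Rightarrow> (nat \<Rightarrow> bool) \<Rightarrow> (nat \<Rightarrow> bool) \<Rightarrow> enat" where
  "tanner_girth n a b = (INF vs \<in> {vs. tanner_cycle n a b vs}. enat (length vs))"

end

theory Submission
  imports Defs
begin

definition nm :: "nat \<Rightarrow> int \<Rightarrow> nat" where
  "nm n x = nat (x mod int n)"

lemma nm_lt: "n \<ge> 1 \<Longrightarrow> nm n x < n"
  unfolding nm_def by (simp add: nat_less_iff)

lemma nm_nat: "i < n \<Longrightarrow> nm n (int i) = i"
  unfolding nm_def by simp

lemma nm_eq: "n \<ge> 1 \<Longrightarrow> nm n x = nm n y \<Longrightarrow> int n dvd (x - y)"
  unfolding nm_def
  by (metis mod_eq_dvd_iff nat_eq_iff2 of_nat_0_less_iff pos_mod_sign zero_less_one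
      less_le_trans)

lemma sub_mod: "n \<ge> 1 \<Longrightarrow> (nm n s + n - nm n r) mod n = nm n (s - r)"
proof -
  assume n: "n \<ge> 1"
  have a: "nm n r < n" using nm_lt n by blast
  have "int ((nm n s + n - nm n r) mod n) = (int (nm n s) + int n - int (nm n r)) mod int n"
    using a by (simp add: zmod_int of_nat_diff)
  also have "\<dots> = (s mod n + n - r mod n) mod n"
    using n by (simp add: nm_def)
  also have "\<dots> = (s - r) mod n"
    by (metis add.commute add_diff_eq mod_add_self2 mod_diff_eq)
  also have "\<dots> = int (nm n (s - r))" using n by (simp add: nm_def)
  finally show ?thesis by simp
qed

lemma nm_cong: "int n dvd (x - y) \<Longrightarrow> nm n x = nm n y"
  unfolding nm_def by (metis mod_eq_dvd_iff)

lemma nd_eq: "\<not> (c::int) dvd x \<Longrightarrow> y = x \<or> y = - x \<Longrightarrow> \<not> c dvd y"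
  by auto

lemma adjA: "n \<ge> 1 \<Longrightarrow> a (nm n (s - r)) \<Longrightarrow> tanner_adj n a b (Chk (nm n s)) (Qb (nm n r))
   \<and> tanner_adj n a b (Qb (nm n r)) (Chk (nm n s))"
  unfolding tanner_adj_def tanner_nodes_def using nm_lt[of n] sub_mod[of n s r] by auto

lemma adjB: "n \<ge> 1 \<Longrightarrow> b (nm n (s - r)) \<Longrightarrow> tanner_adj n a b (Chk (nm n s)) (Qb' (nm n r))
   \<and> tanner_adj n a b (Qb' (nm n r)) (Chk (nm n s))"
  unfolding tanner_adj_def tanner_nodes_def using nm_lt[of n] sub_mod[of n s r] by auto

lemma girth_le: "tanner_cycle n a b vs \<Longrightarrow> length vs \<le> 8 \<Longrightarrow> tanner_girth n a b \<le> 8"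
  unfolding tanner_girth_def
  by (rule order_trans[OF INF_lower[of vs]]) (auto simp: numeral_eq_enat)

lemma two_elems:
  assumes "weight n a \<ge> 2" shows "\<exists>i j. i < n \<and> j < n \<and> i \<noteq> j \<and> a i \<and> a j"
proof -
  have f: "finite {t. t < n \<and> a t}" by simp
  have "\<not> card {t. t < n \<and> a t} \<le> Suc 0" using assms unfolding weight_def by simp
  then show ?thesis using card_le_Suc0_iff_eq[OF f] by blast
qed

lemma four_cycle:
  fixes I J K L :: int
  assumes n: "n \<ge> 1" and ha: "a (nm n I)" "a (nm n J)" and hb: "b (nm n K)" "b (nm n L)"
    and d: "\<not> int n dvd (J - I)" and e: "int n dvd (J - I - L + K)"
  shows "tanner_girth n a b \<le> 8"
proof -
  define vs where "vs = [Chk (nm n 0), Qb (nm n (-I)), Chk (nm n (J - I)), Qb' (nm n (-K))]"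
  have "tanner_adj n a b (vs ! i) (vs ! ((i + 1) mod length vs))" if "i < 4" for i
  proof -
    have "i = 0 \<or> i = 1 \<or> i = 2 \<or> i = 3" using that by auto
    then show ?thesis
    proof (elim disjE)
      assume "i = 0" then show ?thesis unfolding vs_def using adjA[OF n, of a "0" "-I" b] ha by simp
    next
      assume "i = 1" then show ?thesis unfolding vs_def using adjA[OF n, of a "J-I" "-I" b] ha by simp
    next
      assume "i = 2" then show ?thesis unfolding vs_def
        using adjB[OF n, of b "J-I" "-K" a] hb nm_cong[of n "J-I-(-K)" L] e
        by (simp add: algebra_simps)
    next
      assume "i = 3" then show ?thesis unfolding vs_def using adjB[OF n, of b "0" "-K" a] hb by simp
    qed
  qed
  moreover have "distinct vs" unfolding vs_def using nm_eq[OF n, of 0 "J-I"]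
      nd_eq[OF d, of "0 - (J - I)"] by auto
  ultimately have "tanner_cycle n a b vs" unfolding tanner_cycle_def by (simp add: vs_def)
  then show ?thesis by (rule girth_le) (simp add: vs_def)
qed

lemma eight_cycle:
  fixes I J K L :: int
  assumes n: "n \<ge> 1" and ha: "a (nm n I)" "a (nm n J)" and hb: "b (nm n K)" "b (nm n L)"
    and d1: "\<not> int n dvd (J - I)" and d2: "\<not> int n dvd (L - K)"
    and d3: "\<not> int n dvd (J - I - L + K)" and d4: "\<not> int n dvd (J - I - K + L)"
  shows "tanner_girth n a b \<le> 8"
proof -
  define vs where "vs = [Chk (nm n 0), Qb (nm n (-I)), Chk (nm n (J - I)), Qb' (nm n (J-I-K)),
     Chk (nm n (J-I-K+L)), Qb (nm n (-I-K+L)), Chk (nm n (L-K)), Qb' (nm n (-K))]"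
  have "tanner_adj n a b (vs ! i) (vs ! ((i + 1) mod length vs))" if "i < 8" for i
  proof -
    have "i = 0 \<or> i = 1 \<or> i = 2 \<or> i = 3 \<or> i = 4 \<or> i = 5 \<or> i = 6 \<or> i = 7" using that by auto
    then show ?thesis
    proof (elim disjE)
      assume "i = 0" then show ?thesis unfolding vs_def using adjA[OF n, of a "0" "-I" b] ha by simp
    next
      assume "i = 1" then show ?thesis unfolding vs_def using adjA[OF n, of a "J-I" "-I" b] ha by simp
    next
      assume "i = 2" then show ?thesis unfolding vs_def
        using adjB[OF n, of b "J-I" "J-I-K" a] hb by (simp add: algebra_simps)
    next
      assume "i = 3" then show ?thesis unfolding vs_def
        using adjB[OF n, of b "J-I-K+L" "J-I-K" a] hb by (simp add: algebra_simps)
    next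
      assume "i = 4" then show ?thesis unfolding vs_def
        using adjA[OF n, of a "J-I-K+L" "-I-K+L" b] ha by (simp add: algebra_simps)
    next
      assume "i = 5" then show ?thesis unfolding vs_def
        using adjA[OF n, of a "L-K" "-I-K+L" b] ha by (simp add: algebra_simps)
    next
      assume "i = 6" then show ?thesis unfolding vs_def
        using adjB[OF n, of b "L-K" "-K" a] hb by (simp add: algebra_simps)
    next
      assume "i = 7" then show ?thesis unfolding vs_def
        using adjB[OF n, of b "0" "-K" a] hb by simp
    qed
  qed
  moreover have "distinct vs"
  proof -
    have m: "\<And>x y. \<not> int n dvd (x - y) \<Longrightarrow> nm n x \<noteq> nm n y" using nm_eq[OF n] by blast
    have e1: "\<not> int n dvd (0 - (J - I))" by (rule nd_eq[OF d1]) simp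
    have e2: "\<not> int n dvd (0 - (J-I-K+L))" by (rule nd_eq[OF d4]) simp
    have e3: "\<not> int n dvd (0 - (L-K))" by (rule nd_eq[OF d2]) simp
    have e4: "\<not> int n dvd ((J-I) - (J-I-K+L))" by (rule nd_eq[OF d2]) simp
    have e5: "\<not> int n dvd ((J-I) - (L-K))" by (rule nd_eq[OF d3]) simp
    have e6: "\<not> int n dvd ((J-I-K+L) - (L-K))" by (rule nd_eq[OF d1]) simp
    have e7: "\<not> int n dvd ((-I) - (-I-K+L))" by (rule nd_eq[OF d2]) simp
    have e8: "\<not> int n dvd ((J-I-K) - (-K))" by (rule nd_eq[OF d1]) simp
    show ?thesis unfolding vs_def
      using m[OF e1] m[OF e2] m[OF e3] m[OF e4] m[OF e5] m[OF e6] m[OF e7] m[OF e8]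
      by auto
  qed
  ultimately have "tanner_cycle n a b vs" unfolding tanner_cycle_def by (simp add: vs_def)
  then show ?thesis by (rule girth_le) (simp add: vs_def)
qed

theorem corollary1:
  fixes n :: nat and a b :: "nat \<Rightarrow> bool"
  assumes "n \<ge> 1"
    and "weight n a \<ge> 2" and "weight n b \<ge> 2"
  shows "tanner_girth n a b \<le> 8"
proof -
  obtain i j where ij: "i < n" "j < n" "i \<noteq> j" "a i" "a j" using two_elems[OF assms(2)] by blast
  obtain k l where kl: "k < n" "l < n" "k \<noteq> l" "b k" "b l" using two_elems[OF assms(3)] by blast
  have ha: "a (nm n (int i))" "a (nm n (int j))" using ij by (simp_all add: nm_nat)
  have hb: "b (nm n (int k))" "b (nm n (int l))" using kl by (simp_all add: nm_nat)
  have hb': "b (nm n (int l))" "b (nm n (int k))" using hb by auto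
  have nd: "\<not> int n dvd (int x - int y)" if "x < n" "y < n" "x \<noteq> y" for x y
  proof
    assume "int n dvd (int x - int y)"
    then have "int x mod int n = int y mod int n" by (simp add: mod_eq_dvd_iff)
    then show False using that by simp
  qed
  have d1: "\<not> int n dvd (int j - int i)" using nd ij by auto
  have d2: "\<not> int n dvd (int l - int k)" using nd kl by auto
  have d2': "\<not> int n dvd (int k - int l)" using nd kl by auto
  show ?thesis
  proof (cases "int n dvd (int j - int i - int l + int k)")
    case c1: True
    show ?thesis using four_cycle[OF assms(1) ha hb d1 c1] .
  next
    case c1: False
    show ?thesis
    proof (cases "int n dvd (int j - int i - int k + int l)")
      case True
      show ?thesis using four_cycle[OF assms(1) ha hb' d1 True] .
    next
      case False
      show ?thesis using eight_cycle[OF assms(1) ha hb d1 d2 c1 False] .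
    qed
  qed
qed

end
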